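(* Let $x\in\mathbb{R}^m$, let $Y$ be a finite set of classes, let $f:\mathbb{R}^m\to Y$ be a (measurable) classifier, and let $\{\psi_\delta\}_{\delta\in(0,\infty)^n}$, $\psi_\delta:\mathbb{R}^m\to\mathbb{R}^m$, be a multiplicatively composable transformation. Let $\beta=(\beta_1,\dots,\beta_n)^T$ where $\beta_1,\dots,\beta_n$ are independent and identically distributed with $\beta_i\sim\mathrm{Rayleigh}(\sigma)$, $\sigma>0$, and define $g(x)=\arg\max_{c\in Y}\mathbb{P}_\beta\big(f(\psi_\beta(x))=c\big)$. Let $c_A\in Y$ and put $$p_A=\mathbb{P}_\beta\big(f(\psi_\beta(x))=c_A\big),\qquad p_B=\max_{c_B\neq c_A}\mathbb{P}_\beta\big(f(\psi_\beta(x))=c_B\big),$$ and suppose $p_A\ge\underline{p_A}>\overline{p_B}\ge p_B$. For $\gamma=(\gamma_1,\dots,\gamma_n)\in(0,\infty)^n$ let $r=r(\gamma)$ and $\theta=\theta(\gamma)$ be the unique solutions of $$\mathbb{P}\Big(\sum_{i=1}^n(1-\gamma_i^{-2})\beta_i^2\le r\Big)=\underline{p_A},\qquad \mathbb{P}\Big(\sum_{i=1}^n(1-\gamma_i^{-2})\beta_i^2\ge \theta\Big)=\overline{p_B},$$ and let $\Omega$ be the set of all $\gamma\in(0,\infty)^n$ satisfying $$\mathbb{P}\Big(\sum_{i=1}^n(\gamma_i^{2}-1)\beta_i^2\le r\Big)>\mathbb{P}\Big(\sum_{i=1}^n(\gamma_i^{2}-1)\beta_i^2\ge \theta\Big).$$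 Then $g(\psi_\gamma(x))=c_A$ for all $\gamma\in\Omega$.
   Context: A parameterized family of maps $\psi_\delta:X\to X$, $\delta\in\mathcal{B}\subset\mathbb{R}^n$, is called multiplicatively composable if $\psi_\delta\circ\psi_\theta=\psi_{\delta\cdot\theta}$ for all $\delta,\theta\in\mathcal{B}$, where $\delta\cdot\theta\in\mathcal{B}$ denotes the element-wise product. A random variable $\zeta$ has the Rayleigh distribution with scale $\sigma>0$, written $\zeta\sim\mathrm{Rayleigh}(\sigma)$, if it has density $p_\zeta(z)=\sigma^{-2}z\,e^{-z^2/(2\sigma^2)}$ for $z\ge 0$ (and $0$ for $z<0$). *)

theory Defs
  imports "HOL-Probability.Probability"
begin

text \<open>Multiplicatively composable family of maps indexed by \<open>(0,\<infinity>)^n\<close>,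
  parameters represented as functions on a finite index type \<open>'n\<close>;
  element-wise product is \<open>\<lambda>i. \<delta> i * \<theta> i\<close>.\<close>
definition pos_params :: "('n \<Rightarrow> real) set" where
  "pos_params = {\<delta>. \<forall>i. \<delta> i > 0}"

definition mult_composable :: "(('n \<Rightarrow> real) \<Rightarrow> 'a \<Rightarrow> 'a) \<Rightarrow> bool" where
  "mult_composable \<psi> \<longleftrightarrow>
     (\<forall>\<delta>\<in>pos_params. \<forall>\<theta>\<in>pos_params. \<psi> \<delta> \<circ> \<psi> \<theta> = \<psi> (\<lambda>i. \<delta> i * \<theta> i))"

definition rayleigh_density :: "real \<Rightarrow> real \<Rightarrow> real" where
  "rayleigh_density \<sigma> z = (if z \<ge> 0 then z / \<sigma>\<^sup>2 * exp (- z\<^sup>2 / (2 * \<sigma>\<^sup>2)) else 0)"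

definition rayleigh :: "real \<Rightarrow> real measure" where
  "rayleigh \<sigma> = density lborel (\<lambda>z. ennreal (rayleigh_density \<sigma> z))"

definition rayleigh_vec :: "real \<Rightarrow> ('n::finite \<Rightarrow> real) measure" where
  "rayleigh_vec \<sigma> = PiM UNIV (\<lambda>_. rayleigh \<sigma>)"

definition class_prob ::
  "real \<Rightarrow> ('a \<Rightarrow> 'y) \<Rightarrow> (('n::finite \<Rightarrow> real) \<Rightarrow> 'a \<Rightarrow> 'a) \<Rightarrow> 'a \<Rightarrow> 'y \<Rightarrow> real" where
  "class_prob \<sigma> f \<psi> x c = measure (rayleigh_vec \<sigma>) {b \<in> space (rayleigh_vec \<sigma>). f (\<psi> b x) = c}"

definition smoothed ::
  "real \<Rightarrow> ('a \<Rightarrow> 'y) \<Rightarrow> (('n::finite \<Rightarrow> real) \<Rightarrow> 'a \<Rightarrow> 'a) \<Rightarrow> 'a \<Rightarrow> 'y" where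
  "smoothed \<sigma> f \<psi> x = arg_max (class_prob \<sigma> f \<psi> x) (\<lambda>_. True)"

end

theory Submission
  imports Defs
begin



lemma rd_meas[measurable]: "rayleigh_density s \<in> borel_measurable borel"
  unfolding rayleigh_density_def by measurable

lemma rd_nonneg: "rayleigh_density s z \<ge> 0"
  unfolding rayleigh_density_def by auto

lemma sets_rayleigh[simp, measurable_cong]: "sets (rayleigh s) = sets borel"
  unfolding rayleigh_def by simp

lemma space_rayleigh[simp]: "space (rayleigh s) = UNIV"
  unfolding rayleigh_def by simp

lemma prob_space_rayleigh:
  assumes s: "s > 0" shows "prob_space (rayleigh s)"
proof
  have eq: "(\<lambda>z. ennreal (rayleigh_density s z)) = (\<lambda>z. ennreal (z / s\<^sup>2 * exp (- z\<^sup>2 / (2 * s\<^sup>2))) * indicator {0..} z)"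
    by (auto simp: rayleigh_density_def fun_eq_iff indicator_def)
  have "(\<integral>\<^sup>+z. ennreal (z / s\<^sup>2 * exp (- z\<^sup>2 / (2 * s\<^sup>2))) * indicator {0..} z \<partial>lborel) = 0 - (- exp (- 0\<^sup>2 / (2 * s\<^sup>2)))"
  proof (rule nn_integral_FTC_atLeast)
    show "(\<lambda>z. z / s\<^sup>2 * exp (- z\<^sup>2 / (2 * s\<^sup>2))) \<in> borel_measurable borel" by measurable
    fix x :: real
    show "DERIV (\<lambda>z. - exp (- z\<^sup>2 / (2 * s\<^sup>2))) x :> x / s\<^sup>2 * exp (- x\<^sup>2 / (2 * s\<^sup>2))"
      using s by (auto intro!: derivative_eq_intros simp: field_simps power2_eq_square)
    assume "0 \<le> x"
    then show "0 \<le> x / s\<^sup>2 * exp (- x\<^sup>2 / (2 * s\<^sup>2))" by auto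
  next
    show "((\<lambda>z. - exp (- z\<^sup>2 / (2 * s\<^sup>2))) \<longlongrightarrow> 0) at_top"
      using s by real_asymp
  qed
  then show "emeasure (rayleigh s) (space (rayleigh s)) = 1"
    unfolding rayleigh_def by (simp add: emeasure_density eq)
qed


lemma rayleigh_scale:
  assumes c: "c > 0" and s: "s > 0"
  shows "distr (rayleigh s) borel ((*) c) = rayleigh (c * s)"
proof (rule measure_eqI)
  fix A assume A: "A \<in> sets (distr (rayleigh s) borel ((*) c))"
  then have [measurable]: "A \<in> sets borel" by simp
  have pre: "(*) c -` A \<in> sets borel"
    using measurable_sets[of "(*) c" borel borel A] by simp
  have "emeasure (distr (rayleigh s) borel ((*) c)) A = emeasure (rayleigh s) ((*) c -` A)"
    by (subst emeasure_distr) (auto simp: rayleigh_def)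
  also have "\<dots> = (\<integral>\<^sup>+z. ennreal (rayleigh_density s z) * indicator A (c * z) \<partial>lborel)"
    using pre unfolding rayleigh_def
    by (subst emeasure_density) (auto intro!: nn_integral_cong simp: indicator_def)
  also have "\<dots> = ennreal c * (\<integral>\<^sup>+z. ennreal (rayleigh_density (c * s) (0 + c * z)) * indicator A (0 + c * z) \<partial>lborel)"
    using c s by (subst nn_integral_cmult[symmetric]) 
      (auto intro!: nn_integral_cong simp: rayleigh_density_def ennreal_mult' [symmetric] power_mult_distrib field_simps power2_eq_square zero_le_mult_iff
        split: split_indicator)
  also have "\<dots> = (\<integral>\<^sup>+z. ennreal (rayleigh_density (c * s) z) * indicator A z \<partial>lborel)"
    using c by (subst nn_integral_real_affine[of _ c 0]) auto
  also have "\<dots> = emeasure (rayleigh (c * s)) A"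
    unfolding rayleigh_def by (subst emeasure_density) auto
  finally show "emeasure (distr (rayleigh s) borel ((*) c)) A = emeasure (rayleigh (c * s)) A" .
qed simp

definition hr :: "real \<Rightarrow> real \<Rightarrow> real \<Rightarrow> real" where
  "hr s c z = 1 / c\<^sup>2 * exp ((1 - 1 / c\<^sup>2) * z\<^sup>2 / (2 * s\<^sup>2))"

lemma hr_meas[measurable]: "hr s c \<in> borel_measurable borel"
  unfolding hr_def by measurable

lemma rayleigh_ratio:
  assumes c: "c > 0" and s: "s > 0"
  shows "rayleigh (c * s) = density (rayleigh s) (\<lambda>z. ennreal (hr s c z))"
  unfolding rayleigh_def
  apply (subst density_density_eq)
    apply (auto intro!: arg_cong[where f="density lborel"] simp: fun_eq_iff)
  using c s
  apply (auto simp: rayleigh_density_def hr_def ennreal_mult'[symmetric] exp_add[symmetric] field_simps power_mult_distrib)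
  done


lemma hr_nonneg: "hr s c z \<ge> 0" unfolding hr_def by auto

lemma space_rvec[simp]: "space (rayleigh_vec s) = UNIV"
  unfolding rayleigh_vec_def by (simp add: space_PiM)

lemma sets_rvec[measurable_cong]: "sets (rayleigh_vec s) = sets (PiM UNIV (\<lambda>_. borel :: real measure))"
  unfolding rayleigh_vec_def by (intro sets_PiM_cong) auto

lemma psf: "(\<And>i. s i > 0) \<Longrightarrow> product_sigma_finite (\<lambda>i. rayleigh (s i))"
  using product_prob_spaceI[of "\<lambda>i. rayleigh (s i)"] prob_space_rayleigh
  unfolding product_prob_space_def by blast

lemma scal_meas[measurable]:
  "(\<lambda>b i. (g i::real) * b i) \<in> PiM UNIV (\<lambda>_. borel) \<rightarrow>\<^sub>M PiM UNIV (\<lambda>_. borel)"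
  by (rule measurable_PiM_single') (auto simp: space_PiM)


lemma distr_scal:
  fixes \<gamma> :: "'n::finite \<Rightarrow> real"
  assumes g: "\<And>i. \<gamma> i > 0" and s: "s > 0"
  shows "distr (rayleigh_vec s) (PiM UNIV (\<lambda>_. borel)) (\<lambda>b i. \<gamma> i * b i)
       = PiM UNIV (\<lambda>i. rayleigh (\<gamma> i * s))"
proof -
  interpret P: product_sigma_finite "\<lambda>i. rayleigh (\<gamma> i * s)"
    using psf[of "\<lambda>i. \<gamma> i * s"] g s by simp
  interpret Q: product_sigma_finite "\<lambda>i::'n. rayleigh s"
    using psf[of "\<lambda>i. s"] s by simp
  show ?thesis
  proof (rule P.PiM_eqI)
    show "sets (distr (rayleigh_vec s) (PiM UNIV (\<lambda>_. borel)) (\<lambda>b i. \<gamma> i * b i)) = sets (PiM UNIV (\<lambda>i. rayleigh (\<gamma> i * s)))"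
      unfolding sets_distr by (intro sets_PiM_cong) auto
  next
    fix A assume A: "\<And>i. i \<in> (UNIV::'n set) \<Longrightarrow> A i \<in> sets (rayleigh (\<gamma> i * s))"
    then have A': "\<And>i. A i \<in> sets borel" by simp
    have pre: "(*) (\<gamma> i) -` A i \<in> sets borel" for i
      using measurable_sets[of "(*) (\<gamma> i)" borel borel "A i"] A' by simp
    have meas: "(\<lambda>b i. \<gamma> i * b i) \<in> rayleigh_vec s \<rightarrow>\<^sub>M PiM UNIV (\<lambda>_. borel)"
      using scal_meas by (simp add: measurable_cong_sets[OF sets_rvec refl])
    have "(\<lambda>b i. \<gamma> i * b i) -` Pi\<^sub>E UNIV A \<inter> space (rayleigh_vec s) = Pi\<^sub>E UNIV (\<lambda>i. (*) (\<gamma> i) -` A i)"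
      by (auto simp: PiE_iff)
    then have "emeasure (distr (rayleigh_vec s) (PiM UNIV (\<lambda>_. borel)) (\<lambda>b i. \<gamma> i * b i)) (Pi\<^sub>E UNIV A)
        = emeasure (rayleigh_vec s) (Pi\<^sub>E UNIV (\<lambda>i. (*) (\<gamma> i) -` A i))"
      using meas A' by (subst emeasure_distr) (auto intro!: sets_PiM_I_finite)
    also have "\<dots> = (\<Prod>i\<in>UNIV. emeasure (rayleigh s) ((*) (\<gamma> i) -` A i))"
      unfolding rayleigh_vec_def using pre by (subst Q.emeasure_PiM) auto
    also have "\<dots> = (\<Prod>i\<in>UNIV. emeasure (rayleigh (\<gamma> i * s)) (A i))"
    proof (rule prod.cong[OF refl])
      fix i
      have "emeasure (rayleigh s) ((*) (\<gamma> i) -` A i) = emeasure (distr (rayleigh s) borel ((*) (\<gamma> i))) (A i)"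
        using A' by (subst emeasure_distr) auto
      then show "emeasure (rayleigh s) ((*) (\<gamma> i) -` A i) = emeasure (rayleigh (\<gamma> i * s)) (A i)"
        using rayleigh_scale[OF g s] by simp
    qed
    finally show "emeasure (distr (rayleigh_vec s) (PiM UNIV (\<lambda>_. borel)) (\<lambda>b i. \<gamma> i * b i)) (Pi\<^sub>E UNIV A)
        = (\<Prod>i\<in>UNIV. emeasure (rayleigh (\<gamma> i * s)) (A i))" .
  qed simp
qed


lemma density_vec:
  fixes \<gamma> :: "'n::finite \<Rightarrow> real"
  assumes g: "\<And>i. \<gamma> i > 0" and s: "s > 0"
  shows "density (rayleigh_vec s) (\<lambda>b. ennreal (\<Prod>i\<in>UNIV. hr s (\<gamma> i) (b i)))
       = PiM UNIV (\<lambda>i. rayleigh (\<gamma> i * s))"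
proof -
  interpret P: product_sigma_finite "\<lambda>i. rayleigh (\<gamma> i * s)"
    using psf[of "\<lambda>i. \<gamma> i * s"] g s by simp
  interpret Q: product_sigma_finite "\<lambda>i::'n. rayleigh s"
    using psf[of "\<lambda>i. s"] s by simp
  show ?thesis
  proof (rule P.PiM_eqI)
    show "sets (density (rayleigh_vec s) (\<lambda>b. ennreal (\<Prod>i\<in>UNIV. hr s (\<gamma> i) (b i)))) = sets (PiM UNIV (\<lambda>i. rayleigh (\<gamma> i * s)))"
      unfolding sets_density sets_rvec by (intro sets_PiM_cong) auto
  next
    fix A assume A: "\<And>i. i \<in> (UNIV::'n set) \<Longrightarrow> A i \<in> sets (rayleigh (\<gamma> i * s))"
    then have A': "\<And>i. A i \<in> sets borel" by simp
    have PA: "Pi\<^sub>E UNIV A \<in> sets (rayleigh_vec s)"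
      unfolding rayleigh_vec_def using A' by (intro sets_PiM_I_finite) auto
    have ind: "\<And>b. ennreal (\<Prod>i\<in>UNIV. hr s (\<gamma> i) (b i)) * indicator (Pi\<^sub>E UNIV A) b
        = (\<Prod>i\<in>UNIV. ennreal (hr s (\<gamma> i) (b i)) * indicator (A i) (b i))"
    proof -
      fix b :: "'n \<Rightarrow> real"
      have i1: "indicator (Pi\<^sub>E UNIV A) b = (\<Prod>i\<in>UNIV. indicator (A i) (b i) :: ennreal)"
      proof (cases "\<forall>i. b i \<in> A i")
        case True then show ?thesis by (simp add: indicator_def PiE_iff)
      next
        case False
        then obtain j where "b j \<notin> A j" by blast
        then show ?thesis by (auto simp: indicator_def PiE_iff intro!: prod_zero bexI[of _ j])
      qed
      show "ennreal (\<Prod>i\<in>UNIV. hr s (\<gamma> i) (b i)) * indicator (Pi\<^sub>E UNIV A) b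
        = (\<Prod>i\<in>UNIV. ennreal (hr s (\<gamma> i) (b i)) * indicator (A i) (b i))"
        unfolding i1 prod.distrib prod_ennreal[OF hr_nonneg, symmetric] ..
    qed
    have "emeasure (density (rayleigh_vec s) (\<lambda>b. ennreal (\<Prod>i\<in>UNIV. hr s (\<gamma> i) (b i)))) (Pi\<^sub>E UNIV A)
        = (\<integral>\<^sup>+b. (\<Prod>i\<in>UNIV. ennreal (hr s (\<gamma> i) (b i)) * indicator (A i) (b i)) \<partial>rayleigh_vec s)"
      using PA by (subst emeasure_density) (simp_all add: ind)
    also have "\<dots> = (\<Prod>i\<in>UNIV. (\<integral>\<^sup>+z. ennreal (hr s (\<gamma> i) z) * indicator (A i) z \<partial>rayleigh s))"
      unfolding rayleigh_vec_def using A' by (subst Q.product_nn_integral_prod) auto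
    also have "\<dots> = (\<Prod>i\<in>UNIV. emeasure (rayleigh (\<gamma> i * s)) (A i))"
      using A' by (auto intro!: prod.cong simp: rayleigh_ratio[OF g s] emeasure_density)
    finally show "emeasure (density (rayleigh_vec s) (\<lambda>b. ennreal (\<Prod>i\<in>UNIV. hr s (\<gamma> i) (b i)))) (Pi\<^sub>E UNIV A)
        = (\<Prod>i\<in>UNIV. emeasure (rayleigh (\<gamma> i * s)) (A i))" .
  qed simp
qed



lemma np_core:
  fixes \<rho> :: "'a \<Rightarrow> ennreal" and t :: real
  assumes fM: "finite_measure M" and fN: "finite_measure (density M \<rho>)"
    and \<rho>m[measurable]: "\<rho> \<in> borel_measurable M" and X[measurable]: "X \<in> sets M" and Y[measurable]: "Y \<in> sets M"
    and t: "t \<ge> 0"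
    and up: "\<And>x. x \<in> X - Y \<Longrightarrow> ennreal t \<le> \<rho> x"
    and lo: "\<And>x. x \<in> Y - X \<Longrightarrow> \<rho> x \<le> ennreal t"
  shows "t * (measure M X - measure M Y) \<le> measure (density M \<rho>) X - measure (density M \<rho>) Y"
proof -
  interpret M: finite_measure M by fact
  interpret N: finite_measure "density M \<rho>" by fact
  have XY: "X - Y \<in> sets M" and YX: "Y - X \<in> sets M" and XiY: "X \<inter> Y \<in> sets M" by auto
  have "ennreal t * emeasure M (X - Y) = (\<integral>\<^sup>+x. ennreal t * indicator (X - Y) x \<partial>M)"
    using XY by (simp add: nn_integral_cmult_indicator)
  also have "\<dots> \<le> (\<integral>\<^sup>+x. \<rho> x * indicator (X - Y) x \<partial>M)"
    using up by (intro nn_integral_mono) (auto split: split_indicator)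
  also have "\<dots> = emeasure (density M \<rho>) (X - Y)"
    using XY by (simp add: emeasure_density)
  finally have 1: "t * measure M (X - Y) \<le> measure (density M \<rho>) (X - Y)"
    using t by (simp add: M.emeasure_eq_measure N.emeasure_eq_measure ennreal_mult'[symmetric])
  have "emeasure (density M \<rho>) (Y - X) = (\<integral>\<^sup>+x. \<rho> x * indicator (Y - X) x \<partial>M)"
    using YX by (simp add: emeasure_density)
  also have "\<dots> \<le> (\<integral>\<^sup>+x. ennreal t * indicator (Y - X) x \<partial>M)"
    using lo by (intro nn_integral_mono) (auto split: split_indicator)
  also have "\<dots> = ennreal t * emeasure M (Y - X)"
    using YX by (simp add: nn_integral_cmult_indicator)
  finally have 2: "measure (density M \<rho>) (Y - X) \<le> t * measure M (Y - X)"
    using t by (simp add: M.emeasure_eq_measure N.emeasure_eq_measure ennreal_mult'[symmetric])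
  have sX: "X \<in> sets (density M \<rho>)" and sY: "Y \<in> sets (density M \<rho>)" by auto
  have e1: "X \<inter> Y \<union> (X - Y) = X" "X \<inter> Y \<inter> (X - Y) = {}"
    "X \<inter> Y \<union> (Y - X) = Y" "X \<inter> Y \<inter> (Y - X) = {}" by blast+
  have a: "measure M X = measure M (X \<inter> Y) + measure M (X - Y)"
    using M.finite_measure_Union[of "X \<inter> Y" "X - Y"] by (simp add: e1)
  have b: "measure M Y = measure M (X \<inter> Y) + measure M (Y - X)"
    using M.finite_measure_Union[of "X \<inter> Y" "Y - X"] by (simp add: e1)
  have c: "measure (density M \<rho>) X = measure (density M \<rho>) (X \<inter> Y) + measure (density M \<rho>) (X - Y)"
    using N.finite_measure_Union[of "X \<inter> Y" "X - Y"] by (simp add: e1)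
  have d: "measure (density M \<rho>) Y = measure (density M \<rho>) (X \<inter> Y) + measure (density M \<rho>) (Y - X)"
    using N.finite_measure_Union[of "X \<inter> Y" "Y - X"] by (simp add: e1)
  show ?thesis using 1 2 a b c d by (simp add: right_diff_distrib)
qed



theorem theorem2:
  fixes x :: "real ^ 'm"
    and f :: "real ^ 'm \<Rightarrow> 'y::finite"
    and \<psi> :: "('n::finite \<Rightarrow> real) \<Rightarrow> real ^ 'm \<Rightarrow> real ^ 'm"
    and \<sigma> pA_low pB_up :: real
    and cA :: 'y
  assumes f_meas: "f \<in> borel \<rightarrow>\<^sub>M count_space UNIV"
    and \<psi>_meas: "\<And>z. (\<lambda>\<delta>. \<psi> \<delta> z) \<in> PiM UNIV (\<lambda>_. borel) \<rightarrow>\<^sub>M borel"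
    and comp: "mult_composable \<psi>"
    and \<sigma>_pos: "\<sigma> > 0"
    and pA: "class_prob \<sigma> f \<psi> x cA \<ge> pA_low"
    and gap: "pA_low > pB_up"
    and pB: "\<forall>cB. cB \<noteq> cA \<longrightarrow> class_prob \<sigma> f \<psi> x cB \<le> pB_up"
  shows "\<forall>\<gamma>\<in>pos_params. \<forall>r \<theta>.
     measure (rayleigh_vec \<sigma>) {b \<in> space (rayleigh_vec \<sigma>).
        (\<Sum>i\<in>UNIV. (1 - 1 / (\<gamma> i)\<^sup>2) * (b i)\<^sup>2) \<le> r} = pA_low
   \<and> measure (rayleigh_vec \<sigma>) {b \<in> space (rayleigh_vec \<sigma>).
        (\<Sum>i\<in>UNIV. (1 - 1 / (\<gamma> i)\<^sup>2) * (b i)\<^sup>2) \<ge> \<theta>} = pB_up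
   \<and> measure (rayleigh_vec \<sigma>) {b \<in> space (rayleigh_vec \<sigma>).
        (\<Sum>i\<in>UNIV. ((\<gamma> i)\<^sup>2 - 1) * (b i)\<^sup>2) \<le> r}
     > measure (rayleigh_vec \<sigma>) {b \<in> space (rayleigh_vec \<sigma>).
        (\<Sum>i\<in>UNIV. ((\<gamma> i)\<^sup>2 - 1) * (b i)\<^sup>2) \<ge> \<theta>}
   \<longrightarrow> smoothed \<sigma> f \<psi> (\<psi> \<gamma> x) = cA"
proof (intro ballI allI impI)
  fix \<gamma> :: "'n \<Rightarrow> real" and r \<theta> :: real
  assume g: "\<gamma> \<in> pos_params"
  then have gp: "\<And>i. \<gamma> i > 0" by (simp add: pos_params_def)
  define M :: "('n \<Rightarrow> real) measure" where "M = rayleigh_vec \<sigma>"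
  define S where "S = (\<lambda>b::'n \<Rightarrow> real. \<Sum>i\<in>UNIV. (1 - 1 / (\<gamma> i)\<^sup>2) * (b i)\<^sup>2)"
  define S2 where "S2 = (\<lambda>b::'n \<Rightarrow> real. \<Sum>i\<in>UNIV. ((\<gamma> i)\<^sup>2 - 1) * (b i)\<^sup>2)"
  define \<rho> where "\<rho> = (\<lambda>b::'n \<Rightarrow> real. ennreal (\<Prod>i\<in>UNIV. hr \<sigma> (\<gamma> i) (b i)))"
  define N where "N = distr M (PiM UNIV (\<lambda>_. borel)) (\<lambda>b i. \<gamma> i * b i)"
  define K where "K = (\<Prod>i\<in>UNIV. 1 / (\<gamma> i)\<^sup>2)"
  assume "measure (rayleigh_vec \<sigma>) {b \<in> space (rayleigh_vec \<sigma>).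
        (\<Sum>i\<in>UNIV. (1 - 1 / (\<gamma> i)\<^sup>2) * (b i)\<^sup>2) \<le> r} = pA_low
   \<and> measure (rayleigh_vec \<sigma>) {b \<in> space (rayleigh_vec \<sigma>).
        (\<Sum>i\<in>UNIV. (1 - 1 / (\<gamma> i)\<^sup>2) * (b i)\<^sup>2) \<ge> \<theta>} = pB_up
   \<and> measure (rayleigh_vec \<sigma>) {b \<in> space (rayleigh_vec \<sigma>).
        (\<Sum>i\<in>UNIV. ((\<gamma> i)\<^sup>2 - 1) * (b i)\<^sup>2) \<le> r}
     > measure (rayleigh_vec \<sigma>) {b \<in> space (rayleigh_vec \<sigma>).
        (\<Sum>i\<in>UNIV. ((\<gamma> i)\<^sup>2 - 1) * (b i)\<^sup>2) \<ge> \<theta>}"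
  then have H1: "measure M {b. S b \<le> r} = pA_low"
    and H2: "measure M {b. S b \<ge> \<theta>} = pB_up"
    and H3: "measure M {b. S2 b \<le> r} > measure M {b. S2 b \<ge> \<theta>}"
    by (simp_all add: M_def S_def S2_def)
  have sM[measurable_cong]: "sets M = sets (PiM UNIV (\<lambda>_. borel :: real measure))"
    unfolding M_def by (rule sets_rvec)
  have spM[simp]: "space M = UNIV" unfolding M_def by simp
  have sN[measurable_cong]: "sets N = sets (PiM UNIV (\<lambda>_. borel :: real measure))"
    unfolding N_def by simp
  have probM: "prob_space M"
    unfolding M_def rayleigh_vec_def using \<sigma>_pos by (intro prob_space_PiM prob_space_rayleigh)
  interpret M: prob_space M by (rule probM)
  have scal[measurable]: "(\<lambda>b i. \<gamma> i * b i) \<in> M \<rightarrow>\<^sub>M PiM UNIV (\<lambda>_. borel)"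
    using scal_meas by (simp add: measurable_cong_sets[OF sM refl])
  have NM: "N = density M \<rho>"
    unfolding N_def M_def \<rho>_def using distr_scal[where \<gamma>=\<gamma> and s=\<sigma>] density_vec[where \<gamma>=\<gamma> and s=\<sigma>] gp \<sigma>_pos by simp
  have finN: "finite_measure (density M \<rho>)"
  proof -
    have "prob_space N" unfolding N_def by (rule M.prob_space_distr[OF scal])
    then show ?thesis unfolding NM prob_space_def by blast
  qed
  have finM: "finite_measure M" using probM unfolding prob_space_def by blast
  have Kpos: "K > 0" unfolding K_def using gp by (intro prod_pos) (metis less_irrefl divide_pos_pos zero_less_one zero_less_power)
  have rho_eq: "\<rho> b = ennreal (K * exp (S b / (2 * \<sigma>\<^sup>2)))" for b
  proof -
    have "(\<Prod>i\<in>UNIV. hr \<sigma> (\<gamma> i) (b i)) = (\<Prod>i\<in>UNIV. 1 / (\<gamma> i)\<^sup>2) * (\<Prod>i\<in>UNIV. exp ((1 - 1 / (\<gamma> i)\<^sup>2) * (b i)\<^sup>2 / (2 * \<sigma>\<^sup>2)))"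
      unfolding hr_def by (rule prod.distrib)
    also have "\<dots> = K * exp (S b / (2 * \<sigma>\<^sup>2))"
      unfolding K_def S_def by (simp add: exp_sum sum_divide_distrib)
    finally show ?thesis unfolding \<rho>_def by simp
  qed
  have \<rho>m[measurable]: "\<rho> \<in> borel_measurable M"
    unfolding \<rho>_def by measurable
  have Sm[measurable]: "S \<in> borel_measurable M" unfolding S_def by measurable
  have S2m[measurable]: "S2 \<in> borel_measurable M" unfolding S2_def by measurable
  have SN[measurable]: "S \<in> borel_measurable N" unfolding S_def by measurable
  have psm[measurable]: "(\<lambda>\<delta>. \<psi> \<delta> z) \<in> M \<rightarrow>\<^sub>M borel" for z
    using \<psi>_meas by (simp add: measurable_cong_sets[OF sM refl])
  have psmN[measurable]: "(\<lambda>\<delta>. \<psi> \<delta> z) \<in> N \<rightarrow>\<^sub>M borel" for z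
    using \<psi>_meas by (simp add: measurable_cong_sets[OF sN refl])
  note f_meas[measurable]
  have evM: "{b. g b = c} \<in> sets M" if "g \<in> M \<rightarrow>\<^sub>M count_space UNIV" for g :: "('n \<Rightarrow> real) \<Rightarrow> 'y" and c
  proof -
    have "g -` {c} \<inter> space M \<in> sets M" using measurable_sets[OF that, of "{c}"] by simp
    moreover have "g -` {c} \<inter> space M = {b. g b = c}" by auto
    ultimately show ?thesis by simp
  qed
  have fM: "(\<lambda>b. f (\<psi> b y)) \<in> M \<rightarrow>\<^sub>M count_space UNIV" for y
    by (rule measurable_compose[OF psm f_meas])
  have fMs: "(\<lambda>b. f (\<psi> (\<lambda>i. \<gamma> i * b i) y)) \<in> M \<rightarrow>\<^sub>M count_space UNIV" for y
    by (rule measurable_compose[OF measurable_compose[OF scal \<psi>_meas] f_meas])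
  have E1: "{b. f (\<psi> b y) = c} \<in> sets M" for y c by (rule evM[OF fM])
  have E1': "{b. f (\<psi> b y) = c} \<in> sets (PiM UNIV (\<lambda>_. borel))" for y c using E1 sM by simp
  have E2: "{b. f (\<psi> (\<lambda>i. \<gamma> i * b i) y) = c} \<in> sets M" for y c by (rule evM[OF fMs])
  have SL: "{b. S b \<le> t} \<in> sets M" for t
    using measurable_sets[OF Sm, of "{..t}"] by (simp add: vimage_def)
  have SG: "{b. t \<le> S b} \<in> sets M" for t
    using measurable_sets[OF Sm, of "{t..}"] by (simp add: vimage_def)
  have SL': "{b. S b \<le> t} \<in> sets (PiM UNIV (\<lambda>_. borel))" for t using SL sM by simp
  have SG': "{b. t \<le> S b} \<in> sets (PiM UNIV (\<lambda>_. borel))" for t using SG sM by simp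
  have rho_le: "\<rho> b \<le> ennreal (K * exp (t / (2 * \<sigma>\<^sup>2)))" if "S b \<le> t" for b t
    unfolding rho_eq using that Kpos \<sigma>_pos
    by (intro ennreal_leI mult_left_mono) (auto intro: divide_right_mono)
  have rho_ge: "ennreal (K * exp (t / (2 * \<sigma>\<^sup>2))) \<le> \<rho> b" if "t \<le> S b" for b t
    unfolding rho_eq using that Kpos \<sigma>_pos
    by (intro ennreal_leI mult_left_mono) (auto intro: divide_right_mono)
  have AEpos: "AE b in M. \<forall>i\<in>UNIV. 0 < b i"
  proof (rule AE_finite_allI)
    fix i :: 'n
    have "AE z in rayleigh \<sigma>. 0 < z"
      unfolding rayleigh_def
      by (subst AE_density) (auto simp: rayleigh_density_def le_less intro!: AE_I2)
    then show "AE b in M. 0 < b i"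
      unfolding M_def rayleigh_vec_def using \<sigma>_pos
      by (intro AE_PiM_component prob_space_rayleigh) auto
  qed simp
  have cp: "class_prob \<sigma> f \<psi> (\<psi> \<gamma> x) c = measure N {z. f (\<psi> z x) = c}" for c
  proof -
    have "class_prob \<sigma> f \<psi> (\<psi> \<gamma> x) c = measure M {b. f (\<psi> b (\<psi> \<gamma> x)) = c}"
      unfolding class_prob_def M_def by simp
    also have "\<dots> = measure M {b. f (\<psi> (\<lambda>i. \<gamma> i * b i) x) = c}"
    proof (rule measure_eq_AE)
      show "AE b in M. (b \<in> {b. f (\<psi> b (\<psi> \<gamma> x)) = c}) = (b \<in> {b. f (\<psi> (\<lambda>i. \<gamma> i * b i) x) = c})"
        using AEpos
      proof eventually_elim
        case (elim b)
        then have "b \<in> pos_params" by (simp add: pos_params_def)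
        then have "\<psi> b \<circ> \<psi> \<gamma> = \<psi> (\<lambda>i. b i * \<gamma> i)"
          using comp g unfolding mult_composable_def by blast
        then have "(\<psi> b \<circ> \<psi> \<gamma>) x = \<psi> (\<lambda>i. b i * \<gamma> i) x" by simp
        moreover have "(\<lambda>i. b i * \<gamma> i) = (\<lambda>i. \<gamma> i * b i)" by (simp add: mult.commute)
        ultimately have "\<psi> b (\<psi> \<gamma> x) = \<psi> (\<lambda>i. \<gamma> i * b i) x" by simp
        then show ?case by simp
      qed
    qed (rule E1, rule E2)
    also have "\<dots> = measure N {z. f (\<psi> z x) = c}"
      unfolding N_def by (subst measure_distr[OF scal E1']) auto
    finally show ?thesis .
  qed
  have SS2: "S (\<lambda>i. \<gamma> i * b i) = S2 b" for b
    unfolding S_def S2_def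
  proof (intro sum.cong refl)
    fix i
    have "\<gamma> i \<noteq> 0" using gp[of i] by simp
    then show "(1 - 1 / (\<gamma> i)\<^sup>2) * (\<gamma> i * b i)\<^sup>2 = ((\<gamma> i)\<^sup>2 - 1) * (b i)\<^sup>2"
      by (simp add: power_mult_distrib field_simps)
  qed
  have NL: "measure N {z. S z \<le> t} = measure M {b. S2 b \<le> t}" for t
    unfolding N_def by (subst measure_distr[OF scal SL']) (auto simp: SS2)
  have NL': "measure N {z. S z \<ge> t} = measure M {b. S2 b \<ge> t}" for t
    unfolding N_def by (subst measure_distr[OF scal SG']) (auto simp: SS2)
  have cpx: "class_prob \<sigma> f \<psi> x c = measure M {b. f (\<psi> b x) = c}" for c
    unfolding class_prob_def M_def by simp
  \<comment> \<open>Neyman--Pearson, lower bound\<close>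
  have lowA: "measure M {b. S2 b \<le> r} \<le> class_prob \<sigma> f \<psi> (\<psi> \<gamma> x) cA"
  proof -
    have "K * exp (r / (2 * \<sigma>\<^sup>2)) * (measure M {z. f (\<psi> z x) = cA} - measure M {z. S z \<le> r})
        \<le> measure (density M \<rho>) {z. f (\<psi> z x) = cA} - measure (density M \<rho>) {z. S z \<le> r}"
      using Kpos
      by (intro np_core[OF finM finN \<rho>m]) (auto intro: rho_le rho_ge less_imp_le E1 SL SG)
    moreover have "measure M {z. f (\<psi> z x) = cA} - measure M {z. S z \<le> r} \<ge> 0"
      using pA H1 cpx by simp
    moreover have "K * exp (r / (2 * \<sigma>\<^sup>2)) > 0" using Kpos by simp
    ultimately have "measure N {z. S z \<le> r} \<le> measure N {z. f (\<psi> z x) = cA}"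
      unfolding NM by (smt (verit) mult_nonneg_nonneg)
    then show ?thesis using NL cp by simp
  qed
  have upB: "class_prob \<sigma> f \<psi> (\<psi> \<gamma> x) c \<le> measure M {b. S2 b \<ge> \<theta>}" if c: "c \<noteq> cA" for c
  proof -
    have "K * exp (\<theta> / (2 * \<sigma>\<^sup>2)) * (measure M {z. S z \<ge> \<theta>} - measure M {z. f (\<psi> z x) = c})
        \<le> measure (density M \<rho>) {z. S z \<ge> \<theta>} - measure (density M \<rho>) {z. f (\<psi> z x) = c}"
      using Kpos
      by (intro np_core[OF finM finN \<rho>m]) (auto intro: rho_le rho_ge less_imp_le E1 SL SG)
    moreover have "measure M {z. S z \<ge> \<theta>} - measure M {z. f (\<psi> z x) = c} \<ge> 0"
      using pB c H2 cpx by fastforce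
    moreover have "K * exp (\<theta> / (2 * \<sigma>\<^sup>2)) > 0" using Kpos by simp
    ultimately have "measure N {z. f (\<psi> z x) = c} \<le> measure N {z. S z \<ge> \<theta>}"
      unfolding NM by (smt (verit) mult_nonneg_nonneg)
    then show ?thesis using NL' cp by simp
  qed
  have strict: "class_prob \<sigma> f \<psi> (\<psi> \<gamma> x) c < class_prob \<sigma> f \<psi> (\<psi> \<gamma> x) cA" if "c \<noteq> cA" for c
    using upB[OF that] lowA H3 by linarith
  show "smoothed \<sigma> f \<psi> (\<psi> \<gamma> x) = cA"
    unfolding smoothed_def arg_max_def is_arg_max_def
  proof (rule some_equality)
    show "True \<and> \<not> (\<exists>y. True \<and> class_prob \<sigma> f \<psi> (\<psi> \<gamma> x) cA < class_prob \<sigma> f \<psi> (\<psi> \<gamma> x) y)"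
      using strict by (metis less_asym)
  next
    fix c assume "True \<and> \<not> (\<exists>y. True \<and> class_prob \<sigma> f \<psi> (\<psi> \<gamma> x) c < class_prob \<sigma> f \<psi> (\<psi> \<gamma> x) y)"
    then show "c = cA" using strict by blast
  qed
qed

end
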